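(* Let $L\in\{1,2,\dots,q-1\}$, let $\mathcal C$ be a linear $[n,k]$ code over $F=\mathrm{GF}(q)$, and let $\tau\in\mathbb Z_{\ge 0}$ satisfy $\tau\ge \frac{L(n-k)}{L+1}$. If $\mathcal C$ is $(\tau,L)$-list decodable, then $\mathcal C$ is MDS (i.e., its minimum distance is $n-k+1$).
   Context: $F=\mathrm{GF}(q)$. For $L\in\mathbb Z^+$ and $\tau\in\mathbb Z_{\ge0}$, a code $\mathcal C\subseteq F^n$ is $(\tau,L)$-list decodable if for every $y\in F^n$ at most $L$ codewords of $\mathcal C$ lie at Hamming distance at most $\tau$ from $y$. *)

theory Defs
  imports "HOL-Analysis.Analysis"
begin

text \<open>Codes of length n = CARD('n) over the finite field F = 'a (q = CARD('a)).\<close>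

definition hamming_dist :: "'a ^ 'n \<Rightarrow> 'a ^ 'n \<Rightarrow> nat" where
  "hamming_dist x y = card {i. x $ i \<noteq> y $ i}"

definition linear_code :: "('a::field ^ 'n) set \<Rightarrow> nat \<Rightarrow> bool" where
  "linear_code C k \<longleftrightarrow> vec.subspace C \<and> vec.dim C = k"

definition list_decodable :: "('a ^ 'n) set \<Rightarrow> nat \<Rightarrow> nat \<Rightarrow> bool" where
  "list_decodable C \<tau> L \<longleftrightarrow>
     (\<forall>y. card {c \<in> C. hamming_dist c y \<le> \<tau>} \<le> L)"

definition min_distance :: "('a ^ 'n) set \<Rightarrow> nat" where
  "min_distance C = Min {hamming_dist c c' | c c'. c \<in> C \<and> c' \<in> C \<and> c \<noteq> c'}"

end

theory Submission
  imports Defs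
begin

lemma singleton_bound:
  fixes C :: "('a::{finite,field} ^ 'n) set"
  assumes sub: "vec.subspace C" and k: "vec.dim C = k" and k1: "1 \<le> k"
  shows "k \<le> CARD('n) \<and> (\<exists>c\<in>C. c \<noteq> 0 \<and> card {i. c $ i \<noteq> 0} \<le> CARD('n) - k + 1)"
proof -
  obtain B where B: "B \<subseteq> C" "vec.independent B" "C \<subseteq> vec.span B" "card B = k"
    using vec.basis_exists[of C] k by blast
  have spanI: "x \<in> vec.span ((\<lambda>i. axis i 1) ` I)" if "\<forall>i. i \<notin> I \<longrightarrow> x $ i = 0" for x :: "'a^'n" and I
  proof -
    have "x = (\<Sum>i\<in>I. x $ i *s axis i 1)"
      using that by (auto simp: vec_eq_iff sum_component axis_def if_distrib cong: if_cong)
    also have "\<dots> \<in> vec.span ((\<lambda>i. axis i 1) ` I)"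
      by (intro vec.span_sum vec.span_scale vec.span_base) auto
    finally show ?thesis .
  qed
  have "card B \<le> card ((\<lambda>i. axis i (1::'a)) ` (UNIV::'n set))"
    using B by (intro conjunct2[OF vec.independent_span_bound]) (auto intro: spanI)
  also have "\<dots> \<le> CARD('n)" by (rule card_image_le) simp
  finally have kn: "k \<le> CARD('n)" using B by simp
  obtain I :: "'n set" where I: "card I = k - 1" using obtain_subset_with_card_n[of "k-1" "UNIV::'n set"] kn by (metis diff_le_self le_trans)
  define A :: "'a^'n^'n" where "A = (\<chi> i j. if i = j \<and> i \<in> I then 1 else 0)"
  have Av: "(A *v x) $ i = (if i \<in> I then x $ i else 0)" for x i
    by (simp add: A_def matrix_vector_mult_def if_distrib[where f="\<lambda>a. a * _"] cong: if_cong)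
  have "\<not> inj_on ((*v) A) C"
  proof
    assume inj: "inj_on ((*v) A) C"
    have spB: "vec.span B = C" using B sub by (metis vec.span_minimal vec.span_eq_iff subset_antisym vec.span_mono)
    have ind: "vec.independent ((*v) A ` B)"
      by (rule vec.independent_inj_on_image) (use B inj spB in auto)
    have "card ((*v) A ` B) \<le> card ((\<lambda>i. axis i (1::'a)) ` I)"
      using ind by (intro conjunct2[OF vec.independent_span_bound]) (auto intro!: spanI simp: Av)
    also have "\<dots> \<le> k - 1" using card_image_le[of I] I by simp
    finally have "card ((*v) A ` B) \<le> k - 1" .
    moreover have "card ((*v) A ` B) = k" using B inj by (metis card_image inj_on_subset)
    ultimately show False using k1 by simp
  qed
  then obtain x y where xy: "x \<in> C" "y \<in> C" "x \<noteq> y" "A *v x = A *v y" unfolding inj_on_def by blast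
  define c where "c = x - y"
  have cC: "c \<in> C" using xy sub by (simp add: c_def vec.subspace_diff)
  have c0: "c \<noteq> 0" using xy by (simp add: c_def)
  have "{i. c $ i \<noteq> 0} \<subseteq> - I"
  proof
    fix i assume "i \<in> {i. c $ i \<noteq> 0}"
    moreover have "(A *v x) $ i = (A *v y) $ i" using xy by simp
    ultimately show "i \<in> - I" by (auto simp: Av c_def split: if_splits)
  qed
  hence "card {i. c $ i \<noteq> 0} \<le> card (- I)" by (intro card_mono) auto
  also have "card (- I) = CARD('n) - (k - 1)" using I by (simp add: Compl_eq_Diff_UNIV card_Diff_subset)
  finally show ?thesis using kn k1 cC c0 by auto
qed

lemma many_close:
  fixes C :: "('a::{finite,field} ^ 'n) set"
  assumes sub: "vec.subspace C" and cC: "c \<in> C" and c0: "c \<noteq> 0"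
    and Lq: "L + 1 \<le> CARD('a)"
    and wt: "(L+1) * (card {i. c $ i \<noteq> 0} - \<tau>) \<le> card {i. c $ i \<noteq> 0}"
  shows "\<exists>y. L + 1 \<le> card {x \<in> C. hamming_dist x y \<le> \<tau>}"
proof -
  define S where "S = {i. c $ i \<noteq> 0}"
  define w where "w = card S"
  define m where "m = w - \<tau>"
  have wt': "(L+1) * m \<le> w" using wt by (simp add: S_def w_def m_def)
  obtain s where s: "bij_betw s {0..<w} S" using ex_bij_betw_nat_finite[of S] by (auto simp: w_def)
  obtain a :: "nat \<Rightarrow> 'a" where a: "inj_on a {0..L}"
    using card_le_inj[of "{0..L}" "UNIV::'a set"] Lq by auto
  define g where "g = inv_into {0..<w} s"
  define y :: "'a^'n" where "y = (\<chi> i. if i \<in> s ` {..<(L+1)*m} then a (g i div m) * c $ i else 0)"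
  have close: "hamming_dist (a j *s c) y \<le> \<tau>" if j: "j \<le> L" for j
  proof -
    define P where "P = s ` {j*m..<(j+1)*m}"
    have jm: "(j+1)*m \<le> w" using wt' j by (meson add_le_mono1 le_trans mult_le_mono1)
    have PS: "P \<subseteq> S" using s jm by (auto simp: P_def bij_betw_def)
    have cardP: "card P = m"
    proof -
      have "inj_on s {j*m..<(j+1)*m}" using s jm by (auto simp: bij_betw_def intro: inj_on_subset)
      thus ?thesis by (simp add: P_def card_image)
    qed
    have "{i. (a j *s c) $ i \<noteq> y $ i} \<subseteq> S - P"
    proof
      fix i assume i: "i \<in> {i. (a j *s c) $ i \<noteq> y $ i}"
      have "i \<in> S"
      proof (rule ccontr)
        assume "i \<notin> S"
        hence "c $ i = 0" by (simp add: S_def)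
        moreover have "i \<notin> s ` {..<(L+1)*m}" using \<open>i \<notin> S\<close> s wt' by (auto simp: bij_betw_def)
        ultimately show False using i by (simp add: y_def)
      qed
      moreover have "i \<notin> P"
      proof
        assume "i \<in> P"
        then obtain t where t: "t \<in> {j*m..<(j+1)*m}" "i = s t" by (auto simp: P_def)
        have tw: "t \<in> {0..<w}" using t jm by auto
        have gi: "g i = t" using s tw t by (simp add: g_def bij_betw_def inv_into_f_f)
        have mpos: "m > 0" using t by (cases m) auto
        have "t div m = j" using t mpos by (simp add: div_nat_eqI mult.commute)
        moreover have "t < (L+1)*m" using t j
          by (metis atLeastLessThan_iff le_trans less_le_trans mult_le_mono1 add_le_mono1 order_refl)
        ultimately have "y $ i = a j * c $ i" using t gi by (auto simp: y_def)
        thus False using i by simp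
      qed
      ultimately show "i \<in> S - P" by simp
    qed
    hence "hamming_dist (a j *s c) y \<le> card (S - P)"
      unfolding hamming_dist_def by (intro card_mono) auto
    also have "card (S - P) = w - m" using PS cardP by (simp add: card_Diff_subset w_def)
    also have "w - m \<le> \<tau>" by (simp add: m_def)
    finally show ?thesis .
  qed
  have "inj_on (\<lambda>j. a j *s c) {0..L}"
  proof
    fix j1 j2 assume "j1 \<in> {0..L}" "j2 \<in> {0..L}" "a j1 *s c = a j2 *s c"
    moreover obtain i where "c $ i \<noteq> 0" using c0 by (metis vec_eq_iff zero_index)
    ultimately show "j1 = j2" using a
      by (metis inj_onD mult_cancel_right vector_smult_component)
  qed
  hence "card ((\<lambda>j. a j *s c) ` {0..L}) = L + 1" by (simp add: card_image)
  moreover have "(\<lambda>j. a j *s c) ` {0..L} \<subseteq> {x \<in> C. hamming_dist x y \<le> \<tau>}"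
    using close cC sub by (auto intro: vec.subspace_scale)
  ultimately have "L + 1 \<le> card {x \<in> C. hamming_dist x y \<le> \<tau>}"
    by (metis card_mono finite)
  thus ?thesis by blast
qed

theorem mainTheorem1:
  fixes C :: "('a::{finite,field} ^ 'n) set" and k L \<tau> :: nat
  assumes "1 \<le> L" and "L \<le> CARD('a) - 1"
    and "linear_code C k" and "1 \<le> k"
    and "real \<tau> \<ge> real L * (real CARD('n) - real k) / (real L + 1)"
    and "list_decodable C \<tau> L"
  shows "min_distance C = CARD('n) - k + 1"
proof -
  have sub: "vec.subspace C" and dimC: "vec.dim C = k" using assms(3) by (auto simp: linear_code_def)
  obtain c0 where c0: "c0 \<in> C" "c0 \<noteq> 0" "card {i. c0 $ i \<noteq> 0} \<le> CARD('n) - k + 1"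
    and kn: "k \<le> CARD('n)"
    using singleton_bound[OF sub dimC assms(4)] by blast
  have Lq: "L + 1 \<le> CARD('a)" using assms(1,2) by linarith
  have tau: "real L * (real CARD('n) - real k) \<le> real \<tau> * (real L + 1)"
    using assms(5) by (simp add: divide_le_eq add_pos_pos)
  have lower: "CARD('n) - k + 1 \<le> card {i. c $ i \<noteq> 0}" if cc: "c \<in> C" "c \<noteq> 0" for c
  proof (rule ccontr)
    define w where "w = card {i. c $ i \<noteq> 0}"
    assume "\<not> ?thesis"
    hence wle: "w \<le> CARD('n) - k" by (simp add: w_def)
    have "real L * real w \<le> real \<tau> * (real L + 1)"
      using tau wle kn by (smt (verit) of_nat_diff mult_left_mono of_nat_0_le_iff of_nat_mono)
    hence "L * w \<le> \<tau> * (L + 1)" by (metis of_nat_add of_nat_mult of_nat_le_iff of_nat_1)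
    hence "(L+1) * (w - \<tau>) \<le> w"
      by (simp add: diff_mult_distrib2 algebra_simps)
    then obtain y where "L + 1 \<le> card {x \<in> C. hamming_dist x y \<le> \<tau>}"
      using many_close[OF sub cc Lq] by (auto simp: w_def)
    thus False using assms(6) by (auto simp: list_decodable_def dest: spec[of _ y])
  qed
  define D where "D = {hamming_dist c c' | c c'. c \<in> C \<and> c' \<in> C \<and> c \<noteq> c'}"
  have hd: "hamming_dist c c' = card {i. (c - c') $ i \<noteq> 0}" for c c' :: "'a^'n"
    by (simp add: hamming_dist_def)
  have finD: "finite D"
  proof -
    have "D \<subseteq> {..CARD('n)}" by (auto simp: D_def hamming_dist_def card_mono)
    thus ?thesis by (rule finite_subset) simp
  qed
  have inD: "hamming_dist c0 0 \<in> D" unfolding D_def using c0 sub vec.subspace_0[OF sub] by blast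
  have "Min D \<le> CARD('n) - k + 1"
    using Min_le[OF finD inD] c0(3) by (simp add: hd)
  moreover have "CARD('n) - k + 1 \<le> Min D"
  proof -
    have "\<forall>d\<in>D. CARD('n) - k + 1 \<le> d"
    proof
      fix d assume "d \<in> D"
      then obtain c c' where cc: "c \<in> C" "c' \<in> C" "c \<noteq> c'" "d = hamming_dist c c'" by (auto simp: D_def)
      have "c - c' \<in> C" using sub cc by (simp add: vec.subspace_diff)
      moreover have "c - c' \<noteq> 0" using cc by simp
      ultimately show "CARD('n) - k + 1 \<le> d" using lower[of "c - c'"] cc(4) hd[of c c'] by simp
    qed
    thus ?thesis using finD inD by (subst Min_ge_iff) auto
  qed
  ultimately show ?thesis by (simp add: min_distance_def D_def[symmetric])
qed

end
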